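(* Fix $p\in(0,1)$ and $B>0$, and suppose $Y_{a,b}\in[0,B]$ for all pairs. Under the Alternating Path Randomized Design, for a component $\mathcal{P}_s$ of length $k=k(s)$: if $\mathcal{P}_s$ is a path, \[\max_{Y_e\in[0,B]\ \forall e\in\mathcal{P}_s}\mathrm{Var}(\hat\Gamma_s)=\Big(\frac1p+\frac2{1-p}\Big)B^2k+\frac{2B^2(p^{k}-1)}{(1-p)^2};\] if $\mathcal{P}_s$ is a cycle, \[\max_{Y_e\in[0,B]\ \forall e\in\mathcal{P}_s}\mathrm{Var}(\hat\Gamma_s)=\Big(\frac1p+\frac2{1-p}\Big)B^2(k-1)+\frac{2B^2(p^{k-1}-1)}{(1-p)^2}+\frac{B^2\big(4+2p-p^2-p^3-p^{k-2}(2+p+p^2)\big)}{(1-p)(1+p^{k-1})}.\] Moreover, for both paths and cycles, \[\lim_{k\to\infty}\frac{1}{k}\max_{Y_e\in[0,B]\ \forall e\in\mathcal{P}_s}\mathrm{Var}(\hat\Gamma_s)=\frac{B^2(1+p)}{p(1-p)}.\]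
   Context: Setting: $2N$ agents; $\mathbb{M}^t,\mathbb{M}^c$ are one-to-one matchings (sets of unordered pairs of distinct agents, each agent in at most one pair); each pair $(a,b)$ has a fixed real potential outcome $Y_{a,b}$. The disagreement set $\triangle\mathbb{M}^{(t,c)}=(\mathbb{M}^t\cup\mathbb{M}^c)\setminus(\mathbb{M}^t\cap\mathbb{M}^c)$, viewed as a graph, has connected components, each an alternating path or cycle: a sequence $(v_{s,1},\dots,v_{s,k(s)+1})$ whose consecutive pairs $e_{s,j}=(v_{s,j},v_{s,j+1})$, $j=1,\dots,k(s)$, are its edges, alternating between $\triangle\mathbb{M}^{(t,c)}_t=\triangle\mathbb{M}^{(t,c)}\cap\mathbb{M}^t$ and $\triangle\mathbb{M}^{(t,c)}_c=\triangle\mathbb{M}^{(t,c)}\cap\mathbb{M}^c$; a cycle if $v_{s,1}=v_{s,k(s)+1}$, a path otherwise; $k(s)$ is its length. Alternating Path Randomized Design with parameter $p$: indicators $W_{s,j}\in\{0,1\}$, independent across components; within $\mathcal{P}_s$, $\mathbb{P}(W_{s,1}=1)=p/(1+p)$; for $2\le j\le k(s)$ (path) or $2\le j\le k(s)-1$ (cycle), conditionally on $W_{s,1},\dots,W_{s,j-1}$, $W_{s,j}=1$ with probability $p$ if $W_{s,j-1}=0$ and $W_{s,j}=0$ if $W_{s,j-1}=1$; for a cycle, $W_{s,k(s)}=1$ iff $W_{s,1}=W_{s,k(s)-1}=0$. $\hat\Gamma_s=\sum_{j:\,e_{s,j}\in\triangle\mathbb{M}^{(t,c)}_t}\frac{W_{s,j}Y_{e_{s,j}}}{\mathbb{P}(W_{s,j}=1)}-\sum_{j:\,e_{s,j}\in\triangle\mathbb{M}^{(t,c)}_c}\frac{W_{s,j}Y_{e_{s,j}}}{\mathbb{P}(W_{s,j}=1)}$.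 The limit statement is over components (paths, respectively cycles) whose length $k$ tends to infinity, with the maxima given by the formulas above. *)

theory Defs
  imports Complex_Main "HOL-Library.FuncSet"
begin

text \<open>One component P_s of length k, edges e_1..e_k indexed 1..k.
 Assignment outcomes: W : {1..k} -> bool (extensional functions).\<close>

definition outcomes :: "nat \<Rightarrow> (nat \<Rightarrow> bool) set" where
  "outcomes k = {1..k} \<rightarrow>\<^sub>E (UNIV :: bool set)"

definition init_prob :: "real \<Rightarrow> bool \<Rightarrow> real" where
  "init_prob p b = (if b then p / (1 + p) else 1 / (1 + p))"

definition trans_prob :: "real \<Rightarrow> bool \<Rightarrow> bool \<Rightarrow> real" where
  "trans_prob p a b = (if a then (if b then 0 else 1) else (if b then p else 1 - p))"

definition path_weight :: "real \<Rightarrow> nat \<Rightarrow> (nat \<Rightarrow> bool) \<Rightarrow> real" where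
  "path_weight p k w = init_prob p (w 1) * (\<Prod>j\<in>{2..k}. trans_prob p (w (j - 1)) (w j))"

definition cycle_weight :: "real \<Rightarrow> nat \<Rightarrow> (nat \<Rightarrow> bool) \<Rightarrow> real" where
  "cycle_weight p k w = init_prob p (w 1) * (\<Prod>j\<in>{2..k - 1}. trans_prob p (w (j - 1)) (w j))
     * (if w k = (\<not> w 1 \<and> \<not> w (k - 1)) then 1 else 0)"

definition marg :: "((nat \<Rightarrow> bool) \<Rightarrow> real) \<Rightarrow> nat \<Rightarrow> nat \<Rightarrow> real" where
  "marg P k j = (\<Sum>w\<in>outcomes k. if w j then P w else 0)"

text \<open>Sign of edge e_j: +1 if e_j is in the treatment matching, -1 if in the control one.
 Edges alternate; first_t says whether e_1 is a treatment edge.\<close>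
definition edge_sign :: "bool \<Rightarrow> nat \<Rightarrow> real" where
  "edge_sign first_t j = (if odd j = first_t then 1 else -1)"

definition est :: "((nat \<Rightarrow> bool) \<Rightarrow> real) \<Rightarrow> nat \<Rightarrow> bool \<Rightarrow> (nat \<Rightarrow> real) \<Rightarrow> (nat \<Rightarrow> bool) \<Rightarrow> real" where
  "est P k first_t Y w = (\<Sum>j\<in>{1..k}. edge_sign first_t j * (if w j then Y j / marg P k j else 0))"

definition variance_under :: "((nat \<Rightarrow> bool) \<Rightarrow> real) \<Rightarrow> nat \<Rightarrow> ((nat \<Rightarrow> bool) \<Rightarrow> real) \<Rightarrow> real" where
  "variance_under P k f = (\<Sum>w\<in>outcomes k. P w * (f w)\<^sup>2) - (\<Sum>w\<in>outcomes k. P w * f w)\<^sup>2"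

definition path_var :: "real \<Rightarrow> nat \<Rightarrow> bool \<Rightarrow> (nat \<Rightarrow> real) \<Rightarrow> real" where
  "path_var p k first_t Y = variance_under (path_weight p k) k (est (path_weight p k) k first_t Y)"

definition cycle_var :: "real \<Rightarrow> nat \<Rightarrow> bool \<Rightarrow> (nat \<Rightarrow> real) \<Rightarrow> real" where
  "cycle_var p k first_t Y = variance_under (cycle_weight p k) k (est (cycle_weight p k) k first_t Y)"

definition outcome_box :: "nat \<Rightarrow> real \<Rightarrow> (nat \<Rightarrow> real) set" where
  "outcome_box k B = {Y. \<forall>j\<in>{1..k}. 0 \<le> Y j \<and> Y j \<le> B}"

definition path_maxvar :: "real \<Rightarrow> real \<Rightarrow> nat \<Rightarrow> bool \<Rightarrow> real" where
  "path_maxvar p B k first_t = (SUP Y\<in>outcome_box k B. path_var p k first_t Y)"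

definition cycle_maxvar :: "real \<Rightarrow> real \<Rightarrow> nat \<Rightarrow> bool \<Rightarrow> real" where
  "cycle_maxvar p B k first_t = (SUP Y\<in>outcome_box k B. cycle_var p k first_t Y)"

end

theory Submission
  imports Defs
begin


lemma finite_outcomes[simp]: "finite (outcomes n)"
  unfolding outcomes_def by (auto intro: finite_PiE)

lemma outcomes_Suc_eq: "outcomes (Suc n) = (\<lambda>(b, w). w(Suc n := b)) ` (UNIV \<times> outcomes n)"
proof -
  have "{1..Suc n} = insert (Suc n) {1..n}" by auto
  then show ?thesis unfolding outcomes_def by (simp add: PiE_insert_eq)
qed

lemma outcomes_Suc_inj: "inj_on (\<lambda>(b, w). w(Suc n := b)) (UNIV \<times> outcomes n)"
proof -
  have "Suc n \<notin> {1..n}" by auto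
  from inj_combinator[OF this, of "\<lambda>_. UNIV :: bool set"] show ?thesis
    unfolding outcomes_def by simp
qed

lemma sum_outcomes_Suc:
  "(\<Sum>w\<in>outcomes (Suc n). h w) = (\<Sum>w\<in>outcomes n. h (w(Suc n := True)) + h (w(Suc n := False)))"
proof -
  have "(\<Sum>w\<in>outcomes (Suc n). h w) = (\<Sum>x\<in>UNIV \<times> outcomes n. h ((\<lambda>(b, w). w(Suc n := b)) x))"
    unfolding outcomes_Suc_eq by (subst sum.reindex[OF outcomes_Suc_inj]) (simp add: o_def)
  also have "\<dots> = (\<Sum>b\<in>UNIV. \<Sum>w\<in>outcomes n. h (w(Suc n := b)))"
    by (simp add: sum.cartesian_product split_def)
  also have "\<dots> = (\<Sum>w\<in>outcomes n. h (w(Suc n := True)) + h (w(Suc n := False)))"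
    by (simp add: UNIV_bool sum.distrib add.commute)
  finally show ?thesis .
qed

lemma outcomes_0: "outcomes 0 = {\<lambda>_. undefined}"
  unfolding outcomes_def by simp

lemma path_weight_cong:
  assumes "\<And>j. 1 \<le> j \<Longrightarrow> j \<le> n \<Longrightarrow> w j = v j" "1 \<le> n"
  shows "path_weight p n w = path_weight p n v"
  unfolding path_weight_def using assms
  by (intro arg_cong2[where f="(*)"] prod.cong) auto

lemma path_weight_Suc:
  assumes "1 \<le> n"
  shows "path_weight p (Suc n) w = path_weight p n w * trans_prob p (w n) (w (Suc n))"
  unfolding path_weight_def using assms by (simp add: prod.cl_ivl_Suc)



definition Ep :: "real \<Rightarrow> nat \<Rightarrow> ((nat \<Rightarrow> bool) \<Rightarrow> real) \<Rightarrow> real" where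
  "Ep p n h = (\<Sum>w\<in>outcomes n. path_weight p n w * h w)"

fun fwd :: "real \<Rightarrow> (nat \<Rightarrow> bool \<Rightarrow> real) \<Rightarrow> nat \<Rightarrow> bool \<Rightarrow> real" where
  "fwd p g 0 b = init_prob p b"
| "fwd p g (Suc j) b = g (Suc j) b * (fwd p g j True * trans_prob p True b + fwd p g j False * trans_prob p False b)"

lemma fwd_sum_lemma:
  assumes "1 \<le> n" "0 < p"
  shows "(\<Sum>w\<in>outcomes n. if w n = b then path_weight p n w * (\<Prod>l\<in>{1..n}. g l (w l)) else 0) = fwd p g n b"
  using assms(1)
proof (induction n arbitrary: b rule: dec_induct)
  case base
  have "p + 1 \<noteq> 0" using assms by auto
  then show ?case
    by (cases b) (simp_all add: sum_outcomes_Suc[of _ 0] outcomes_0 path_weight_def init_prob_def trans_prob_def field_simps)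
next
  case (step n)
  have eq: "(\<Sum>w\<in>outcomes (Suc n). if w (Suc n) = b then path_weight p (Suc n) w * (\<Prod>l\<in>{1..Suc n}. g l (w l)) else 0)
     = (\<Sum>w\<in>outcomes n. path_weight p n w * (\<Prod>l\<in>{1..n}. g l (w l)) * trans_prob p (w n) b * g (Suc n) b)"
  proof -
    { fix w c
      have pw: "path_weight p n (w(Suc n := c)) = path_weight p n w"
        by (rule path_weight_cong) (use step in auto)
      have pr: "(\<Prod>l\<in>{1..n}. g l ((w(Suc n := c)) l)) = (\<Prod>l\<in>{1..n}. g l (w l))"
        by (rule prod.cong) auto
      have "path_weight p (Suc n) (w(Suc n := c)) * (\<Prod>l\<in>{1..Suc n}. g l ((w(Suc n := c)) l))
        = path_weight p n w * (\<Prod>l\<in>{1..n}. g l (w l)) * trans_prob p (w n) c * g (Suc n) c"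
        using step(1) by (simp add: path_weight_Suc pw pr prod.cl_ivl_Suc)
    } note * = this
    show ?thesis unfolding sum_outcomes_Suc by (rule sum.cong[OF refl], cases b) (simp_all only: fun_upd_same * if_True if_False simp_thms add_0_right add_0_left)
  qed
  have "(\<Sum>w\<in>outcomes n. path_weight p n w * (\<Prod>l\<in>{1..n}. g l (w l)) * trans_prob p (w n) b * g (Suc n) b)
      = (\<Sum>w\<in>outcomes n. (if w n = True then path_weight p n w * (\<Prod>l\<in>{1..n}. g l (w l)) else 0) * (trans_prob p True b * g (Suc n) b)
           + (if w n = False then path_weight p n w * (\<Prod>l\<in>{1..n}. g l (w l)) else 0) * (trans_prob p False b * g (Suc n) b))"
    by (rule sum.cong) auto
  also have "\<dots> = fwd p g n True * (trans_prob p True b * g (Suc n) b) + fwd p g n False * (trans_prob p False b * g (Suc n) b)"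
    by (simp add: sum.distrib sum_distrib_right[symmetric] step(3)[of True, simplified] step(3)[of False, simplified])
  finally show ?case using eq by (simp add: algebra_simps)
qed

lemma Ep_prod:
  assumes "1 \<le> n" "0 < p"
  shows "Ep p n (\<lambda>w. \<Prod>l\<in>{1..n}. g l (w l)) = fwd p g n True + fwd p g n False"
proof -
  have "Ep p n (\<lambda>w. \<Prod>l\<in>{1..n}. g l (w l)) =
    (\<Sum>w\<in>outcomes n. (if w n = True then path_weight p n w * (\<Prod>l\<in>{1..n}. g l (w l)) else 0)
       + (if w n = False then path_weight p n w * (\<Prod>l\<in>{1..n}. g l (w l)) else 0))"
    unfolding Ep_def by (rule sum.cong) auto
  then show ?thesis by (simp only: sum.distrib fwd_sum_lemma[OF assms])
qed

lemma fwd_evolve: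
  assumes "a \<le> b" "\<And>j. a < j \<Longrightarrow> j \<le> b \<Longrightarrow> g j = (\<lambda>_. 1)" "0 < p"
  shows "fwd p g b True = (fwd p g a True + fwd p g a False) * (p/(1+p)) + (-p)^(b-a) * (fwd p g a True - (fwd p g a True + fwd p g a False) * (p/(1+p)))
       \<and> fwd p g b False = (fwd p g a True + fwd p g a False) * (1 - p/(1+p)) - (-p)^(b-a) * (fwd p g a True - (fwd p g a True + fwd p g a False) * (p/(1+p)))"
  using assms(1,2)
proof (induction b rule: dec_induct)
  case base
  show ?case by (simp add: algebra_simps)
next
  case (step b)
  define q where "q = p/(1+p)"
  have hq: "q * (1+p) = p" unfolding q_def using assms(3) by (simp add: field_simps)
  define T where "T = fwd p g a True"
  define F where "F = fwd p g a False"
  define E where "E = (-p)^(b-a)"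
  have g: "g (Suc b) = (\<lambda>_. 1)" using step by auto
  have IH: "fwd p g b True = (T + F) * q + E * (T - (T + F) * q)"
     "fwd p g b False = (T + F) * (1 - q) - E * (T - (T + F) * q)"
    using step unfolding T_def F_def E_def q_def by auto
  have e: "(-p)^(Suc b - a) = (-p) * E" unfolding E_def using step by (simp add: Suc_diff_le)
  have d1: "((T + F) * (1 - q) - E * (T - (T + F) * q)) * p - ((T + F) * q - p * E * (T - (T + F) * q)) = (T+F)*(p - q*(1+p))"
    by (simp add: algebra_simps)
  have d2: "((T + F) * q + E * (T - (T + F) * q) + ((T + F) * (1 - q) - E * (T - (T + F) * q)) * (1 - p)) -
     ((T + F) * (1 - q) + p * E * (T - (T + F) * q)) = (T+F)*(q*(1+p) - p)"
    by (simp add: algebra_simps)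
  show ?case unfolding q_def[symmetric] T_def[symmetric] F_def[symmetric] e
    using hq d1 d2 by (simp add: g IH trans_prob_def)
qed



lemma prod_ind: "finite A \<Longrightarrow> (\<Prod>l\<in>A. (if P l then 0 else 1::real)) = (if \<exists>l\<in>A. P l then 0 else 1)"
  by (induction A rule: finite_induct) auto

lemma fwd_Suc_T: "fwd p g (Suc a) True = g (Suc a) True * (p * fwd p g a False)"
  by (simp add: trans_prob_def)
lemma fwd_Suc_F: "fwd p g (Suc a) False = g (Suc a) False * (fwd p g a True + (1 - p) * fwd p g a False)"
  by (simp add: trans_prob_def)

declare fwd.simps[simp del]

lemma fwd_sum_const:
  assumes "a \<le> b" "\<And>j. a < j \<Longrightarrow> j \<le> b \<Longrightarrow> g j = (\<lambda>_. 1)" "0 < p"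
  shows "fwd p g b True + fwd p g b False = fwd p g a True + fwd p g a False"
  using fwd_evolve[of a b g p, OF assms] by (simp add: algebra_simps)

lemma fwd_stat:
  assumes "a \<le> b" "\<And>j. a < j \<Longrightarrow> j \<le> b \<Longrightarrow> g j = (\<lambda>_. 1)" "0 < p"
    "fwd p g a True = S * (p/(1+p))" "fwd p g a False = S * (1 - p/(1+p))"
  shows "fwd p g b True = S * (p/(1+p)) \<and> fwd p g b False = S * (1 - p/(1+p))"
  using fwd_evolve[of a b g p, OF assms(1-3)] assms(4,5) by (simp add: algebra_simps)

lemma fwd_0: "0 < p \<Longrightarrow> fwd p g 0 True = 1 * (p/(1+p)) \<and> fwd p g 0 False = 1 * (1 - p/(1+p))"
  by (simp add: fwd.simps init_prob_def field_simps)

lemma by_u: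
  assumes "0 < (p::real)" "\<And>u. 0 < u \<Longrightarrow> P (u - 1)"
  shows "P p"
  using assms(2)[of "1+p"] assms(1) by simp

lemma alg1: assumes "0 < (p::real)" shows "p * (1 - p/(1+p)) = p/(1+p)"
proof -
  obtain u where pu: "p = u - 1" and u: "0 < u" using assms by (intro that[of "1+p"]) auto
  have u0: "u \<noteq> 0" using u by simp
  show ?thesis by (simp add: pu u0 field_simps)
qed

lemma Ep_W:
  assumes "1 \<le> i" "i \<le> n" "0 < p"
  shows "Ep p n (\<lambda>w. if w i then 1 else 0) = p/(1+p)"
proof -
  define g where "g l b = (if l = i \<and> \<not> b then 0 else (1::real))" for l b
  have "(\<lambda>w. if w i then 1 else 0) = (\<lambda>w. \<Prod>l\<in>{1..n}. g l (w l))"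
    using assms unfolding g_def by (auto simp: prod_ind intro!: ext)
  then have "Ep p n (\<lambda>w. if w i then 1 else 0) = fwd p g n True + fwd p g n False"
    using Ep_prod[of n p g] assms by simp
  also have "\<dots> = fwd p g i True + fwd p g i False"
    by (rule fwd_sum_const) (use assms in \<open>auto simp: g_def fun_eq_iff\<close>)
  also have "\<dots> = p/(1+p)"
  proof -
    have a: "fwd p g (i-1) True = 1 * (p/(1+p)) \<and> fwd p g (i-1) False = 1 * (1 - p/(1+p))"
      by (rule fwd_stat) (use assms fwd_0 in \<open>auto simp: g_def fun_eq_iff\<close>)
    have i: "i = Suc (i - 1)" using assms by simp
    have "fwd p g i True = g i True * (p * fwd p g (i-1) False)"
      using fwd_Suc_T[of p g "i-1"] i by simp
    also have "\<dots> = p/(1+p)" using a alg1 assms by (simp add: g_def)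
    finally have 1: "fwd p g i True = p/(1+p)" .
    have "fwd p g i False = g i False * (fwd p g (i-1) True + (1 - p) * fwd p g (i-1) False)"
      using fwd_Suc_F[of p g "i-1"] i by simp
    also have "\<dots> = 0" by (simp add: g_def)
    finally show ?thesis using 1 by simp
  qed
  finally show ?thesis .
qed

abbreviation pq :: "real \<Rightarrow> real" where "pq p \<equiv> p/(1+p)"

lemma alg2: assumes "0 < (p::real)"
  shows "p * (pq p * (1 - pq p) - E * (pq p - pq p * pq p)) = pq p * pq p + pq p * (1 - pq p) * ((-p) * E)"
proof -
  obtain u where pu: "p = u - 1" and u: "0 < u" using assms by (intro that[of "1+p"]) auto
  have u0: "u \<noteq> 0" using u by simp
  show ?thesis by (simp add: pu u0 field_simps)
qed

lemma alg3: assumes "0 < (p::real)"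
  shows "pq p + (1 - p) * (1 - pq p) = 1 - pq p"
proof -
  obtain u where pu: "p = u - 1" and u: "0 < u" using assms by (intro that[of "1+p"]) auto
  have u0: "u \<noteq> 0" using u by simp
  show ?thesis by (simp add: pu u0 field_simps)
qed

lemma alg4: assumes "0 < (p::real)"
  shows "(1 - pq p) * pq p + E * (0 - (1 - pq p) * pq p) + (1 - p) * ((1 - pq p) * (1 - pq p) - E * (0 - (1 - pq p) * pq p))
    = (1 - pq p) * (1 - pq p) - pq p * pq p * E"
proof -
  obtain u where pu: "p = u - 1" and u: "0 < u" using assms by (intro that[of "1+p"]) auto
  have u0: "u \<noteq> 0" using u by simp
  show ?thesis by (simp add: pu u0 field_simps)
qed

lemma alg5: assumes "0 < (p::real)"
    and "F1 = (1 - pq p) * (1 - pq p) - E1 * (0 - (1 - pq p) * pq p)"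
    and "Tj = p * F1"
  shows "(Tj * pq p + E2 * (Tj - Tj * pq p)) + (1 - p) * (Tj * (1 - pq p) - E2 * (Tj - Tj * pq p))
    = pq p * (1 - pq p) * (1 - pq p) * (1 - (-p) * E1) * (1 - (-p) * E2)"
proof -
  obtain u where pu: "p = u - 1" and u: "0 < u" using assms by (intro that[of "1+p"]) auto
  have u0: "u \<noteq> 0" using u by simp
  show ?thesis unfolding assms(3) assms(2) by (simp add: pu u0 field_simps)
qed

lemma Ep_WW:
  assumes "1 \<le> i" "i < j" "j \<le> n" "0 < p"
  shows "Ep p n (\<lambda>w. if w i \<and> w j then 1 else 0) = pq p * pq p + pq p * (1 - pq p) * (-p)^(j-i)"
proof -
  define g where "g l b = (if (l = i \<or> l = j) \<and> \<not> b then 0 else (1::real))" for l b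
  have "(\<lambda>w. if w i \<and> w j then 1 else 0) = (\<lambda>w. \<Prod>l\<in>{1..n}. g l (w l))"
    using assms unfolding g_def by (auto simp: prod_ind intro!: ext) (use assms in \<open>auto intro: bexI[of _ i] bexI[of _ j]\<close>)
  then have "Ep p n (\<lambda>w. if w i \<and> w j then 1 else 0) = fwd p g n True + fwd p g n False"
    using Ep_prod[of n p g] assms by simp
  also have "\<dots> = fwd p g j True + fwd p g j False"
    by (rule fwd_sum_const) (use assms in \<open>auto simp: g_def fun_eq_iff\<close>)
  also have "\<dots> = pq p * pq p + pq p * (1 - pq p) * (-p)^(j-i)"
  proof -
    have a: "fwd p g (i-1) True = 1 * (p/(1+p)) \<and> fwd p g (i-1) False = 1 * (1 - p/(1+p))"
      by (rule fwd_stat) (use assms fwd_0 in \<open>auto simp: g_def fun_eq_iff\<close>)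
    have i: "i = Suc (i - 1)" using assms by simp
    have "fwd p g i True = g i True * (p * fwd p g (i-1) False)"
      using fwd_Suc_T[of p g "i-1"] i by simp
    also have "\<dots> = pq p" using a alg1 assms by (simp add: g_def)
    finally have bT: "fwd p g i True = pq p" .
    have "fwd p g i False = g i False * (fwd p g (i-1) True + (1 - p) * fwd p g (i-1) False)"
      using fwd_Suc_F[of p g "i-1"] i by simp
    also have "\<dots> = 0" by (simp add: g_def)
    finally have bF: "fwd p g i False = 0" .
    have c: "fwd p g (j-1) False = pq p * (1 - pq p) - (-p)^(j-1-i) * (pq p - pq p * pq p)"
    proof -
      have gi: "\<And>l. i < l \<Longrightarrow> l \<le> j-1 \<Longrightarrow> g l = (\<lambda>_. 1)" using assms by (auto simp: g_def fun_eq_iff)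
      have "i \<le> j - 1" using assms by simp
      from fwd_evolve[of i "j-1" g p, OF this gi assms(4)] show ?thesis using bT bF by simp
    qed
    have j: "j = Suc (j - 1)" using assms by simp
    have "fwd p g j True = g j True * (p * fwd p g (j-1) False)"
      using fwd_Suc_T[of p g "j-1"] j by simp
    also have "\<dots> = p * (pq p * (1 - pq p) - (-p)^(j-1-i) * (pq p - pq p * pq p))"
      using c by (simp add: g_def)
    also have "\<dots> = pq p * pq p + pq p * (1 - pq p) * ((-p) * (-p)^(j-1-i))"
      by (rule alg2[OF assms(4)])
    also have "(-p) * (-p)^(j-1-i) = (-p)^(j-i)"
      using assms by (simp flip: power_Suc add: Suc_diff_Suc)
    finally have dT: "fwd p g j True = pq p * pq p + pq p * (1 - pq p) * (-p)^(j-i)" .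
    have "fwd p g j False = g j False * (fwd p g (j-1) True + (1 - p) * fwd p g (j-1) False)"
      using fwd_Suc_F[of p g "j-1"] j by simp
    also have "\<dots> = 0" by (simp add: g_def)
    finally show ?thesis using dT by simp
  qed
  finally show ?thesis .
qed

lemma Ep_Z:
  assumes "2 \<le> n" "0 < p"
  shows "Ep p n (\<lambda>w. if \<not> w 1 \<and> \<not> w n then 1 else 0) = (1 - pq p) * (1 - pq p) - pq p * pq p * (-p)^(n-2)"
proof -
  define g where "g l b = (if (l = 1 \<or> l = n) \<and> b then 0 else (1::real))" for l b
  have "(\<lambda>w. if \<not> w 1 \<and> \<not> w n then 1 else 0) = (\<lambda>w. \<Prod>l\<in>{1..n}. g l (w l))"
    using assms unfolding g_def by (auto simp: prod_ind intro!: ext) (use assms in \<open>auto intro: bexI[of _ 1] bexI[of _ n]\<close>)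
  then have "Ep p n (\<lambda>w. if \<not> w 1 \<and> \<not> w n then 1 else 0) = fwd p g n True + fwd p g n False"
    using Ep_prod[of n p g] assms by simp
  also have "\<dots> = (1 - pq p) * (1 - pq p) - pq p * pq p * (-p)^(n-2)"
  proof -
    have bT: "fwd p g 1 True = 0"
      using fwd_Suc_T[of p g 0] by (simp add: g_def)
    have "fwd p g 1 False = pq p + (1 - p) * (1 - pq p)"
      using fwd_Suc_F[of p g 0] fwd_0[of p g] assms by (simp add: g_def)
    also have "\<dots> = 1 - pq p" by (rule alg3[OF assms(2)])
    finally have bF: "fwd p g 1 False = 1 - pq p" .
    have gi: "\<And>l. 1 < l \<Longrightarrow> l \<le> n-1 \<Longrightarrow> g l = (\<lambda>_. 1)" using assms by (auto simp: g_def fun_eq_iff)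
    have "1 \<le> n - 1" using assms by simp
    from fwd_evolve[of 1 "n-1" g p, OF this gi assms(2)] bT bF
    have c: "fwd p g (n-1) True = (1 - pq p) * pq p + (-p)^(n-2) * (0 - (1 - pq p) * pq p)"
       "fwd p g (n-1) False = (1 - pq p) * (1 - pq p) - (-p)^(n-2) * (0 - (1 - pq p) * pq p)"
      by (simp_all add: diff_diff_left numeral_2_eq_2)
    have nn: "n = Suc (n - 1)" using assms by simp
    have "fwd p g n True = 0"
      using fwd_Suc_T[of p g "n-1"] nn by (simp add: g_def)
    moreover have "fwd p g n False = fwd p g (n-1) True + (1 - p) * fwd p g (n-1) False"
      using fwd_Suc_F[of p g "n-1"] nn by (simp add: g_def)
    ultimately show ?thesis unfolding c using alg4[OF assms(2)] by simp
  qed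
  finally show ?thesis .
qed

lemma Ep_WZ:
  assumes "1 < j" "j < n" "0 < p"
  shows "Ep p n (\<lambda>w. if w j \<and> \<not> w 1 \<and> \<not> w n then 1 else 0)
     = pq p * (1 - pq p) * (1 - pq p) * (1 - (-p)^(j-1)) * (1 - (-p)^(n-j))"
proof -
  define g where "g l b = (if ((l = 1 \<or> l = n) \<and> b) \<or> (l = j \<and> \<not> b) then 0 else (1::real))" for l b
  have "(\<lambda>w. if w j \<and> \<not> w 1 \<and> \<not> w n then 1 else 0) = (\<lambda>w. \<Prod>l\<in>{1..n}. g l (w l))"
    using assms unfolding g_def by (auto simp: prod_ind intro!: ext) (use assms in \<open>auto intro: bexI[of _ 1] bexI[of _ n] bexI[of _ j]\<close>)
  then have "Ep p n (\<lambda>w. if w j \<and> \<not> w 1 \<and> \<not> w n then 1 else 0) = fwd p g n True + fwd p g n False"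
    using Ep_prod[of n p g] assms by simp
  also have "\<dots> = pq p * (1 - pq p) * (1 - pq p) * (1 - (-p)^(j-1)) * (1 - (-p)^(n-j))"
  proof -
    have bT: "fwd p g 1 True = 0"
      using fwd_Suc_T[of p g 0] by (simp add: g_def)
    have "fwd p g 1 False = pq p + (1 - p) * (1 - pq p)"
      using fwd_Suc_F[of p g 0] fwd_0[of p g] assms by (simp add: g_def)
    also have "\<dots> = 1 - pq p" by (rule alg3[OF assms(3)])
    finally have bF: "fwd p g 1 False = 1 - pq p" .
    have gi: "\<And>l. 1 < l \<Longrightarrow> l \<le> j-1 \<Longrightarrow> g l = (\<lambda>_. 1)" using assms by (auto simp: g_def fun_eq_iff)
    have "1 \<le> j - 1" using assms by simp
    from fwd_evolve[of 1 "j-1" g p, OF this gi assms(3)] bT bF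
    have c: "fwd p g (j-1) False = (1 - pq p) * (1 - pq p) - (-p)^(j-2) * (0 - (1 - pq p) * pq p)"
      by (simp_all add: diff_diff_left numeral_2_eq_2)
    have jj: "j = Suc (j - 1)" using assms by simp
    have dT: "fwd p g j True = p * fwd p g (j-1) False"
      using fwd_Suc_T[of p g "j-1"] jj assms by (simp add: g_def)
    have dF: "fwd p g j False = 0"
      using fwd_Suc_F[of p g "j-1"] jj by (simp add: g_def)
    have gi2: "\<And>l. j < l \<Longrightarrow> l \<le> n-1 \<Longrightarrow> g l = (\<lambda>_. 1)" using assms by (auto simp: g_def fun_eq_iff)
    have "j \<le> n - 1" using assms by simp
    from fwd_evolve[of j "n-1" g p, OF this gi2 assms(3)] dF
    have e: "fwd p g (n-1) True = fwd p g j True * pq p + (-p)^(n-1-j) * (fwd p g j True - fwd p g j True * pq p)"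
       "fwd p g (n-1) False = fwd p g j True * (1 - pq p) - (-p)^(n-1-j) * (fwd p g j True - fwd p g j True * pq p)"
      by simp_all
    have nn: "n = Suc (n - 1)" using assms by simp
    have "fwd p g n True = 0"
      using fwd_Suc_T[of p g "n-1"] nn by (simp add: g_def)
    moreover have "fwd p g n False = fwd p g (n-1) True + (1 - p) * fwd p g (n-1) False"
      using fwd_Suc_F[of p g "n-1"] nn assms by (simp add: g_def)
    moreover have "(-p)^(j-1) = (-p) * (-p)^(j-2)"
      using assms by (simp flip: power_Suc add: Suc_diff_Suc numeral_2_eq_2)
    moreover have "(-p)^(n-j) = (-p) * (-p)^(n-1-j)"
      using assms by (simp flip: power_Suc add: Suc_diff_Suc)
    ultimately show ?thesis unfolding e using alg5[OF assms(3) c dT] by simp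
  qed
  finally show ?thesis .
qed



lemma var_lin:
  assumes "finite J"
  shows "variance_under P k (\<lambda>w. \<Sum>j\<in>J. c j * X j w) =
    (\<Sum>i\<in>J. \<Sum>j\<in>J. c i * c j * ((\<Sum>w\<in>outcomes k. P w * (X i w * X j w))
        - (\<Sum>w\<in>outcomes k. P w * X i w) * (\<Sum>w\<in>outcomes k. P w * X j w)))"
proof -
  have 1: "(\<Sum>w\<in>outcomes k. P w * (\<Sum>j\<in>J. c j * X j w)\<^sup>2)
     = (\<Sum>i\<in>J. \<Sum>j\<in>J. c i * c j * (\<Sum>w\<in>outcomes k. P w * (X i w * X j w)))"
  proof -
    have "(\<Sum>w\<in>outcomes k. P w * (\<Sum>j\<in>J. c j * X j w)\<^sup>2)
       = (\<Sum>w\<in>outcomes k. \<Sum>i\<in>J. \<Sum>j\<in>J. c i * c j * (P w * (X i w * X j w)))"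
      by (rule sum.cong[OF refl]) (simp add: power2_eq_square sum_product sum_distrib_left mult_ac)
    also have "\<dots> = (\<Sum>i\<in>J. \<Sum>j\<in>J. \<Sum>w\<in>outcomes k. c i * c j * (P w * (X i w * X j w)))"
      by (simp add: sum.swap[of _ "outcomes k"] sum.swap[of _ "outcomes k" J])
    also have "\<dots> = (\<Sum>i\<in>J. \<Sum>j\<in>J. c i * c j * (\<Sum>w\<in>outcomes k. P w * (X i w * X j w)))"
      by (simp add: sum_distrib_left)
    finally show ?thesis .
  qed
  have 2: "(\<Sum>w\<in>outcomes k. P w * (\<Sum>j\<in>J. c j * X j w)) = (\<Sum>j\<in>J. c j * (\<Sum>w\<in>outcomes k. P w * X j w))"
    by (simp add: sum_distrib_left sum_distrib_right sum.swap[of _ "outcomes k"] mult_ac)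
  show ?thesis
    unfolding variance_under_def 1 2
    by (simp add: power2_eq_square sum_product right_diff_distrib sum_subtractf mult_ac)
qed

definition ndist :: "nat \<Rightarrow> nat \<Rightarrow> nat" where
  "ndist i j = (if i \<le> j then j - i else i - j)"

lemma edge_sign_prod: "edge_sign ft i * edge_sign ft j = (-1::real)^(i+j)"
proof -
  have "edge_sign ft i = (if ft then -1 else 1) * (-1::real)^i" for i
    unfolding edge_sign_def by (cases ft; cases "even i") auto
  then show ?thesis by (simp add: power_add)
qed

lemma neg1_dist: "(-1::real)^(i+j) = (-1)^(ndist i j)"
proof -
  have "i + j = ndist i j + 2 * min i j" unfolding ndist_def by auto
  then show ?thesis by (simp add: power_add power_mult)
qed

lemma sign_dist: "edge_sign ft i * edge_sign ft j * (-p)^(ndist i j) = (p::real)^(ndist i j)"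
proof -
  have "(-p)^(ndist i j) = (-1)^(ndist i j) * p^(ndist i j)" by (simp add: power_minus')
  then show ?thesis unfolding edge_sign_prod neg1_dist by (simp flip: power_mult_distrib power_add mult.assoc add: power_mult[symmetric])
qed



lemma pq_pos: "0 < p \<Longrightarrow> 0 < pq p" by simp
lemma pq_lt1: "0 < p \<Longrightarrow> pq p < 1" by simp

lemma alg6: assumes "0 < (p::real)" shows "(1 - pq p) / pq p = 1 / p"
proof -
  obtain u where pu: "p = u - 1" and u: "0 < u" using assms by (intro that[of "1+p"]) auto
  have u0: "u \<noteq> 0" using u by simp
  have "u - 1 \<noteq> 0" using assms pu by simp
  then show ?thesis by (simp add: pu u0 field_simps)
qed

lemma ind_mult: "(if a then 1 else 0) * (if b then 1 else 0) = (if a \<and> b then 1 else (0::real))"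
  by simp

lemma cov_path:
  assumes "i \<in> {1..n}" "j \<in> {1..n}" "0 < p"
  shows "Ep p n (\<lambda>w. (if w i then 1 else 0) * (if w j then 1 else 0)) - Ep p n (\<lambda>w. if w i then 1 else 0) * Ep p n (\<lambda>w. if w j then 1 else 0)
    = pq p * (1 - pq p) * (-p)^(ndist i j)"
proof -
  have Ei: "Ep p n (\<lambda>w. if w i then 1 else 0) = pq p" using Ep_W assms by auto
  have Ej: "Ep p n (\<lambda>w. if w j then 1 else 0) = pq p" using Ep_W assms by auto
  consider "i = j" | "i < j" | "j < i" by linarith
  then show ?thesis
  proof cases
    case 1
    have "(\<lambda>w. (if w i then 1 else 0) * (if w j then 1 else 0::real)) = (\<lambda>w. if w i then 1 else 0)"
      using 1 by auto
    then show ?thesis using Ei 1 by (simp add: ndist_def algebra_simps)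
  next
    case 2
    then show ?thesis using Ep_WW[of i j n p] assms Ei Ej by (simp add: ndist_def ind_mult)
  next
    case 3
    have "(\<lambda>w. (if w i then 1 else 0) * (if w j then 1 else (0::real))) = (\<lambda>w. if w j \<and> w i then 1 else 0)"
      by auto
    then show ?thesis using 3 Ep_WW[of j i n p] assms Ei Ej by (simp add: ndist_def)
  qed
qed

lemma marg_path:
  assumes "j \<in> {1..n}" "0 < p"
  shows "marg (path_weight p n) n j = pq p"
proof -
  have "marg (path_weight p n) n j = Ep p n (\<lambda>w. if w j then 1 else 0)"
    unfolding marg_def Ep_def by (rule sum.cong) auto
  then show ?thesis using Ep_W assms by auto
qed

lemma path_var_formula:
  assumes "1 \<le> n" "0 < p"
  shows "path_var p n ft Y = (\<Sum>i\<in>{1..n}. \<Sum>j\<in>{1..n}. Y i * Y j * p^(ndist i j)) / p"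
proof -
  have est: "est (path_weight p n) n ft Y = (\<lambda>w. \<Sum>j\<in>{1..n}. (edge_sign ft j * Y j / pq p) * (if w j then 1 else 0))"
    unfolding est_def using marg_path[OF _ assms(2)] by (intro ext sum.cong) auto
  have "path_var p n ft Y = (\<Sum>i\<in>{1..n}. \<Sum>j\<in>{1..n}. (edge_sign ft i * Y i / pq p) * (edge_sign ft j * Y j / pq p) *
        (pq p * (1 - pq p) * (-p)^(ndist i j)))"
    unfolding path_var_def est var_lin[OF finite_atLeastAtMost]
    using cov_path[OF _ _ assms(2)] unfolding Ep_def by (intro sum.cong refl) auto
  also have "\<dots> = (\<Sum>i\<in>{1..n}. \<Sum>j\<in>{1..n}. Y i * Y j * p^(ndist i j) / p)"
  proof (intro sum.cong refl)
    fix i j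
    have gen: "x \<noteq> 0 \<Longrightarrow> (a / x) * (b / x) * (x * (1 - x) * E) = (a * b * E) * ((1 - x) / x)" for a b x E :: real
      by (simp add: field_simps power2_eq_square)
    have "pq p \<noteq> 0" using assms by simp
    from gen[OF this] have "(edge_sign ft i * Y i / pq p) * (edge_sign ft j * Y j / pq p) * (pq p * (1 - pq p) * (-p)^(ndist i j))
      = Y i * Y j * (edge_sign ft i * edge_sign ft j * (-p)^(ndist i j)) * ((1 - pq p) / pq p)"
      by (simp add: mult_ac)
    also have "\<dots> = Y i * Y j * p^(ndist i j) / p"
      unfolding sign_dist alg6[OF assms(2)] by simp
    finally show "(edge_sign ft i * Y i / pq p) * (edge_sign ft j * Y j / pq p) * (pq p * (1 - pq p) * (-p)^(ndist i j))
      = Y i * Y j * p^(ndist i j) / p" .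
  qed
  finally show ?thesis by (simp add: sum_divide_distrib)
qed



lemma G_closed:
  assumes "0 < p" "p < (1::real)"
  shows "(\<Sum>i\<in>{1..n}. p^(Suc n - i)) = p * (1 - p^n) / (1 - p)"
proof (induction n)
  case 0 then show ?case by simp
next
  case (Suc n)
  have "(\<Sum>i\<in>{1..Suc n}. p^(Suc (Suc n) - i)) = (\<Sum>i\<in>{1..n}. p * p^(Suc n - i)) + p"
    by (simp add: Suc_diff_le)
  also have "\<dots> = p * (p * (1 - p^n) / (1 - p)) + p" using Suc.IH by (simp add: sum_distrib_left[symmetric])
  also have "\<dots> = p * (1 - p^Suc n) / (1 - p)"
  proof -
    have "1 - p \<noteq> 0" using assms by simp
    then show ?thesis by (simp add: field_simps)
  qed
  finally show ?case .
qed

lemma sum_sq_Suc: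
  "(\<Sum>i\<in>{1..Suc n}. \<Sum>j\<in>{1..Suc n}. f i j) = (\<Sum>i\<in>{1..n}. \<Sum>j\<in>{1..n}. f i j)
     + (\<Sum>i\<in>{1..n}. f i (Suc n)) + (\<Sum>j\<in>{1..n}. f (Suc n) j) + f (Suc n) (Suc n)"
  by (simp add: sum.distrib add_ac)

lemma TT_alg:
  assumes v: "v = 1 - p" and vnz: "v \<noteq> 0" and pnz: "(p::real) \<noteq> 0"
  shows "(real n + 2*(real n*p - real n*p^2 - p + p^(n+1))/v^2) + 2 * (p * (1 - p^n)/v) + 1
       = (real (Suc n) + 2*(real (Suc n)*p - real (Suc n)*p^2 - p + p^(Suc n+1))/v^2)"
  apply (simp add: field_simps vnz pnz)
  apply (simp add: v algebra_simps eval_nat_numeral)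
  done

lemma TT_closed:
  assumes "0 < p" "p < (1::real)"
  shows "(\<Sum>i\<in>{1..n}. \<Sum>j\<in>{1..n}. p^(ndist i j)) = real n + 2*(real n*p - real n*p^2 - p + p^(n+1))/(1-p)^2"
proof (induction n)
  case 0 then show ?case by simp
next
  case (Suc n)
  have "(\<Sum>i\<in>{1..n}. p^(ndist i (Suc n))) = (\<Sum>i\<in>{1..n}. p^(Suc n - i))"
    by (rule sum.cong) (auto simp: ndist_def)
  then have a: "(\<Sum>i\<in>{1..n}. p^(ndist i (Suc n))) = p * (1 - p^n) / (1 - p)"
    using G_closed[OF assms, of n] by simp
  have "(\<Sum>i\<in>{1..n}. p^(ndist (Suc n) i)) = (\<Sum>i\<in>{1..n}. p^(Suc n - i))"
    by (rule sum.cong) (auto simp: ndist_def)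
  then have b: "(\<Sum>j\<in>{1..n}. p^(ndist (Suc n) j)) = p * (1 - p^n) / (1 - p)"
    using G_closed[OF assms, of n] by simp
  have c: "p^(ndist (Suc n) (Suc n)) = 1" by (simp add: ndist_def)
  have "(\<Sum>i\<in>{1..Suc n}. \<Sum>j\<in>{1..Suc n}. p^(ndist i j)) =
     (real n + 2*(real n*p - real n*p^2 - p + p^(n+1))/(1-p)^2) + 2 * (p * (1 - p^n)/(1-p)) + 1"
    unfolding sum_sq_Suc Suc.IH a b c by simp
  also have "\<dots> = real (Suc n) + 2*(real (Suc n)*p - real (Suc n)*p^2 - p + p^(Suc n+1))/(1-p)^2"
    by (rule TT_alg) (use assms in auto)
  finally show ?case .
qed

lemma path_F_alg:
  assumes v: "v = 1 - p" and vnz: "v \<noteq> 0" and pnz: "(p::real) \<noteq> 0"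
  shows "(1 / p + 2 / v) * B\<^sup>2 * real n + 2 * B\<^sup>2 * (p ^ n - 1) / v\<^sup>2 = B\<^sup>2 * (real n + 2*(real n*p - real n*p^2 - p + p^(n+1))/v^2) / p"
  apply (simp add: field_simps vnz pnz)
  apply (simp add: v algebra_simps eval_nat_numeral)
  done

lemma path_part:
  assumes "0 < p" "p < 1" "0 < B" "1 \<le> k"
  shows "(\<exists>Y\<in>outcome_box k B. path_var p k ft Y = (1 / p + 2 / (1 - p)) * B\<^sup>2 * real k + 2 * B\<^sup>2 * (p ^ k - 1) / (1 - p)\<^sup>2)
    \<and> (\<forall>Y\<in>outcome_box k B. path_var p k ft Y \<le> (1 / p + 2 / (1 - p)) * B\<^sup>2 * real k + 2 * B\<^sup>2 * (p ^ k - 1) / (1 - p)\<^sup>2)"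
proof -
  have F: "(1 / p + 2 / (1 - p)) * B\<^sup>2 * real k + 2 * B\<^sup>2 * (p ^ k - 1) / (1 - p)\<^sup>2
     = (\<Sum>i\<in>{1..k}. \<Sum>j\<in>{1..k}. B * B * p^(ndist i j)) / p"
  proof -
    have e1: "(\<Sum>i\<in>{1..k}. \<Sum>j\<in>{1..k}. B * B * p^(ndist i j)) = B\<^sup>2 * (\<Sum>i\<in>{1..k}. \<Sum>j\<in>{1..k}. p^(ndist i j))"
      by (simp add: sum_distrib_left power2_eq_square mult.assoc)
    show ?thesis unfolding e1 TT_closed[OF assms(1,2)] using path_F_alg[of "1-p" p B k] assms by simp
  qed
  have w: "(\<lambda>_. B) \<in> outcome_box k B" using assms by (simp add: outcome_box_def)
  show ?thesis
  proof
    show "\<exists>Y\<in>outcome_box k B. path_var p k ft Y = (1 / p + 2 / (1 - p)) * B\<^sup>2 * real k + 2 * B\<^sup>2 * (p ^ k - 1) / (1 - p)\<^sup>2"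
      using w F path_var_formula[OF assms(4,1)] by auto
    show "\<forall>Y\<in>outcome_box k B. path_var p k ft Y \<le> (1 / p + 2 / (1 - p)) * B\<^sup>2 * real k + 2 * B\<^sup>2 * (p ^ k - 1) / (1 - p)\<^sup>2"
    proof
      fix Y assume Y: "Y \<in> outcome_box k B"
      have "(\<Sum>i\<in>{1..k}. \<Sum>j\<in>{1..k}. Y i * Y j * p^(ndist i j)) \<le> (\<Sum>i\<in>{1..k}. \<Sum>j\<in>{1..k}. B * B * p^(ndist i j))"
      proof (intro sum_mono)
        fix i j assume "i \<in> {1..k}" "j \<in> {1..k}"
        then have "0 \<le> Y i" "Y i \<le> B" "0 \<le> Y j" "Y j \<le> B" using Y by (auto simp: outcome_box_def)
        then have "Y i * Y j \<le> B * B" by (intro mult_mono) auto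
        then show "Y i * Y j * p^(ndist i j) \<le> B * B * p^(ndist i j)"
          using assms by (intro mult_right_mono) auto
      qed
      then show "path_var p k ft Y \<le> (1 / p + 2 / (1 - p)) * B\<^sup>2 * real k + 2 * B\<^sup>2 * (p ^ k - 1) / (1 - p)\<^sup>2"
        unfolding F path_var_formula[OF assms(4,1)] using assms by (intro divide_right_mono) auto
    qed
  qed
qed



definition extw :: "nat \<Rightarrow> (nat \<Rightarrow> bool) \<Rightarrow> (nat \<Rightarrow> bool)" where
  "extw n w = w(Suc n := (\<not> w 1 \<and> \<not> w n))"

definition XC :: "nat \<Rightarrow> nat \<Rightarrow> (nat \<Rightarrow> bool) \<Rightarrow> real" where
  "XC n j w = (if extw n w j then 1 else 0)"

definition KC :: "real \<Rightarrow> nat \<Rightarrow> bool \<Rightarrow> nat \<Rightarrow> nat \<Rightarrow> real" where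
  "KC p n ft i j = edge_sign ft i * edge_sign ft j *
     (Ep p n (\<lambda>w. XC n i w * XC n j w) - Ep p n (XC n i) * Ep p n (XC n j)) / (Ep p n (XC n i) * Ep p n (XC n j))"

lemma cyc_reduce:
  assumes "1 \<le> n"
  shows "(\<Sum>w\<in>outcomes (Suc n). cycle_weight p (Suc n) w * h w) = Ep p n (\<lambda>w. h (extw n w))"
proof -
  have cw: "cycle_weight p (Suc n) (w(Suc n := b)) = path_weight p n w * (if b = (\<not> w 1 \<and> \<not> w n) then 1 else 0)" for w b
  proof -
    have "(\<Prod>j\<in>{2..n}. trans_prob p ((w(Suc n := b)) (j - 1)) ((w(Suc n := b)) j))
        = (\<Prod>j\<in>{2..n}. trans_prob p (w (j - 1)) (w j))"
      by (rule prod.cong) auto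
    then show ?thesis using assms unfolding cycle_weight_def path_weight_def by auto
  qed
  show ?thesis
    unfolding sum_outcomes_Suc Ep_def cw extw_def by (rule sum.cong) auto
qed

lemma marg_cycle:
  assumes "1 \<le> n"
  shows "marg (cycle_weight p (Suc n)) (Suc n) j = Ep p n (XC n j)"
proof -
  have "marg (cycle_weight p (Suc n)) (Suc n) j = (\<Sum>w\<in>outcomes (Suc n). cycle_weight p (Suc n) w * (if w j then 1 else 0))"
    unfolding marg_def by (rule sum.cong) auto
  then show ?thesis unfolding cyc_reduce[OF assms] XC_def by simp
qed

lemma cycle_var_K:
  assumes "1 \<le> n"
  shows "cycle_var p (Suc n) ft Y = (\<Sum>i\<in>{1..Suc n}. \<Sum>j\<in>{1..Suc n}. Y i * Y j * KC p n ft i j)"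
proof -
  define f where "f = est (cycle_weight p (Suc n)) (Suc n) ft Y"
  have f: "f (extw n w) = (\<Sum>j\<in>{1..Suc n}. (edge_sign ft j * Y j / Ep p n (XC n j)) * XC n j w)" for w
    unfolding f_def est_def marg_cycle[OF assms] XC_def by (rule sum.cong) auto
  have "cycle_var p (Suc n) ft Y = variance_under (path_weight p n) n (\<lambda>w. f (extw n w))"
    unfolding cycle_var_def variance_under_def f_def[symmetric] cyc_reduce[OF assms] Ep_def ..
  also have "\<dots> = (\<Sum>i\<in>{1..Suc n}. \<Sum>j\<in>{1..Suc n}. (edge_sign ft i * Y i / Ep p n (XC n i)) * (edge_sign ft j * Y j / Ep p n (XC n j))
       * (Ep p n (\<lambda>w. XC n i w * XC n j w) - Ep p n (XC n i) * Ep p n (XC n j)))"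
    unfolding f var_lin[OF finite_atLeastAtMost] Ep_def ..
  also have "\<dots> = (\<Sum>i\<in>{1..Suc n}. \<Sum>j\<in>{1..Suc n}. Y i * Y j * KC p n ft i j)"
    unfolding KC_def by (intro sum.cong refl) (simp add: field_simps)
  finally show ?thesis .
qed

lemma XC_low: "1 \<le> j \<Longrightarrow> j \<le> n \<Longrightarrow> XC n j = (\<lambda>w. if w j then 1 else 0)"
  unfolding XC_def extw_def by auto

lemma XC_top: "XC n (Suc n) = (\<lambda>w. if \<not> w 1 \<and> \<not> w n then 1 else 0)"
  unfolding XC_def extw_def by auto

lemma KC_path:
  assumes "i \<in> {1..n}" "j \<in> {1..n}" "0 < p"
  shows "KC p n ft i j = p^(ndist i j) / p"
proof -
  have Ei: "Ep p n (\<lambda>w. if w i then 1 else 0) = pq p" using Ep_W assms by auto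
  have Ej: "Ep p n (\<lambda>w. if w j then 1 else 0) = pq p" using Ep_W assms by auto
  have gen: "x \<noteq> 0 \<Longrightarrow> a * (x * (1 - x) * E) / (x * x) = (a * E) * ((1 - x) / x)" for a x E :: real
    by (simp add: field_simps)
  have "pq p \<noteq> 0" using assms by simp
  have "KC p n ft i j = edge_sign ft i * edge_sign ft j * (pq p * (1 - pq p) * (-p)^(ndist i j)) / (pq p * pq p)"
  proof -
    have xi: "XC n i = (\<lambda>w. if w i then 1 else 0)" using assms by (intro XC_low) auto
    have xj: "XC n j = (\<lambda>w. if w j then 1 else 0)" using assms by (intro XC_low) auto
    have c: "Ep p n (\<lambda>w. (if w i then 1 else 0) * (if w j then 1 else 0)) - pq p * pq p = pq p * (1 - pq p) * (-p)^(ndist i j)"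
      using cov_path[OF assms] unfolding Ei Ej .
    show ?thesis unfolding KC_def xi xj Ei Ej c ..
  qed
  also have "\<dots> = (edge_sign ft i * edge_sign ft j * (-p)^(ndist i j)) * ((1 - pq p) / pq p)"
    using gen[OF \<open>pq p \<noteq> 0\<close>] by simp
  also have "\<dots> = p^(ndist i j) / p" unfolding sign_dist alg6[OF assms(3)] by simp
  finally show ?thesis .
qed



definition Dc :: "real \<Rightarrow> nat \<Rightarrow> nat \<Rightarrow> real" where
  "Dc p n i = p^(i-1) + p^(n-i) + (if even i then 1 else -1) * p^(n-1) * (1-p)"

lemma alg7: assumes "0 < (p::real)"
  shows "(1 - pq p) * (1 - pq p) - pq p * pq p * (- y) = (1 - pq p)^2 * (1 + p * p * y)"
proof -
  obtain u where pu: "p = u - 1" and u: "0 < u" using assms by (intro that[of "1+p"]) auto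
  have u0: "u \<noteq> 0" using u by simp
  show ?thesis by (simp add: pu u0 field_simps power2_eq_square)
qed

lemma EZ:
  assumes "odd n" "3 \<le> n" "0 < p"
  shows "Ep p n (\<lambda>w. if \<not> w 1 \<and> \<not> w n then 1 else 0) = (1 - pq p)^2 * (1 + p^n)"
proof -
  have "odd (n - 2)" using assms by auto
  then have a: "(-p)^(n-2) = - (p^(n-2))" by (simp add: power_minus_odd)
  have nn: "n = (n-2) + 2" using assms by simp
  have "p^n = p^(n-2) * p^2" by (metis power_add nn)
  then have b: "p^n = p * p * p^(n-2)" by (simp add: power2_eq_square mult_ac)
  have "Ep p n (\<lambda>w. if \<not> w 1 \<and> \<not> w n then 1 else 0) = (1 - pq p) * (1 - pq p) - pq p * pq p * (-p)^(n-2)"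
    by (rule Ep_Z) (use assms in auto)
  also have "\<dots> = (1 - pq p)^2 * (1 + p * p * p^(n-2))" unfolding a by (rule alg7[OF assms(3)])
  finally show ?thesis unfolding b .
qed

lemma EWZ:
  assumes "1 \<le> i" "i \<le> n" "2 \<le> n" "0 < p"
  shows "Ep p n (\<lambda>w. if w i \<and> \<not> w 1 \<and> \<not> w n then 1 else 0)
     = pq p * (1 - pq p) * (1 - pq p) * (1 - (-p)^(i-1)) * (1 - (-p)^(n-i))"
proof -
  consider "i = 1" | "i = n" | "1 < i \<and> i < n" using assms by linarith
  then show ?thesis
  proof cases
    case 1
    then have "(\<lambda>w. if w i \<and> \<not> w 1 \<and> \<not> w n then 1 else (0::real)) = (\<lambda>w. 0)" by auto
    then show ?thesis using 1 by (simp add: Ep_def)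
  next
    case 2
    then have "(\<lambda>w. if w i \<and> \<not> w 1 \<and> \<not> w n then 1 else (0::real)) = (\<lambda>w. 0)" by auto
    then show ?thesis using 2 by (simp add: Ep_def)
  next
    case 3
    then show ?thesis using Ep_WZ[of i n p] assms by simp
  qed
qed

lemma par_D:
  assumes "odd n" "1 \<le> i" "i \<le> n"
  shows "(-1::real)^(i + Suc n) * ((1 - (-p)^(i-1)) * (1 - (-p)^(n-i)) - (1 + p^n)) = Dc p n i"
proof -
  have pn: "p^n = p * p^(n-1)" using assms by (simp flip: power_Suc)
  have pm: "p^(i-1) * p^(n-i) = p^(n-1)" using assms by (simp flip: power_add)
  show ?thesis
  proof (cases "even i")
    case True
    have s: "(-1::real)^(i + Suc n) = 1" using True assms by simp
    have a: "(-p)^(i-1) = - (p^(i-1))" using True assms by (simp add: power_minus_odd)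
    have b: "(-p)^(n-i) = - (p^(n-i))" using True assms by (simp add: power_minus_odd)
    have "(1 + p^(i-1)) * (1 + p^(n-i)) - (1 + p * p^(n-1)) - (p^(i-1) + p^(n-i) + p^(n-1) * (1-p))
       = p^(i-1) * p^(n-i) - p^(n-1)" by (simp add: algebra_simps)
    then show ?thesis unfolding Dc_def s a b pn using True pm by simp
  next
    case False
    have s: "(-1::real)^(i + Suc n) = -1" using False assms by simp
    have a: "(-p)^(i-1) = p^(i-1)" using False assms by (simp add: power_minus_even)
    have b: "(-p)^(n-i) = p^(n-i)" using False assms by (simp add: power_minus_even)
    have "- ((1 - p^(i-1)) * (1 - p^(n-i)) - (1 + p * p^(n-1))) - (p^(i-1) + p^(n-i) - p^(n-1) * (1-p))
       = p^(n-1) - p^(i-1) * p^(n-i)" by (simp add: algebra_simps)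
    then show ?thesis unfolding Dc_def s a b pn using False pm by simp
  qed
qed

lemma KC_ik:
  assumes "i \<in> {1..n}" "odd n" "3 \<le> n" "0 < p"
  shows "KC p n ft i (Suc n) = Dc p n i / (1 + p^n)"
proof -
  have xi: "XC n i = (\<lambda>w. if w i then 1 else 0)" using assms by (intro XC_low) auto
  have prod: "(\<lambda>w. XC n i w * XC n (Suc n) w) = (\<lambda>w. if w i \<and> \<not> w 1 \<and> \<not> w n then 1 else 0)"
    unfolding xi XC_top by auto
  have Ei: "Ep p n (XC n i) = pq p" unfolding xi using Ep_W assms by auto
  have Ek: "Ep p n (XC n (Suc n)) = (1 - pq p)^2 * (1 + p^n)" unfolding XC_top using EZ assms by auto
  have Eik: "Ep p n (\<lambda>w. XC n i w * XC n (Suc n) w) = pq p * (1 - pq p) * (1 - pq p) * (1 - (-p)^(i-1)) * (1 - (-p)^(n-i))"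
    unfolding prod using EWZ assms by auto
  have c: "pq p * (1 - pq p)^2 \<noteq> 0" using assms by simp
  have "0 \<le> p^n" using assms by simp
  then have w: "1 + p^n \<noteq> 0" by linarith
  have gen: "c \<noteq> 0 \<Longrightarrow> w \<noteq> 0 \<Longrightarrow> s * (c * A - c * w) / (c * w) = s * (A - w) / w" for s c A w :: real
    by (simp add: field_simps)
  have "KC p n ft i (Suc n) = edge_sign ft i * edge_sign ft (Suc n) *
     (pq p * (1 - pq p)^2 * ((1 - (-p)^(i-1)) * (1 - (-p)^(n-i))) - pq p * (1 - pq p)^2 * (1 + p^n)) / (pq p * (1 - pq p)^2 * (1 + p^n))"
    unfolding KC_def Ei Ek Eik by (simp add: power2_eq_square mult_ac)
  also have "\<dots> = edge_sign ft i * edge_sign ft (Suc n) * ((1 - (-p)^(i-1)) * (1 - (-p)^(n-i)) - (1 + p^n)) / (1 + p^n)"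
    by (rule gen[OF c w])
  also have "\<dots> = Dc p n i / (1 + p^n)"
    unfolding edge_sign_prod using par_D[of n i p] assms by simp
  finally show ?thesis .
qed

lemma KC_sym: "KC p n ft i j = KC p n ft j i"
  unfolding KC_def by (simp add: mult_ac)

lemma KC_kk:
  assumes "odd n" "3 \<le> n" "0 < p"
  shows "KC p n ft (Suc n) (Suc n) = (1 - (1 - pq p)^2 * (1 + p^n)) / ((1 - pq p)^2 * (1 + p^n))"
proof -
  have sq: "(\<lambda>w. XC n (Suc n) w * XC n (Suc n) w) = XC n (Suc n)" unfolding XC_top by auto
  have ss: "edge_sign ft (Suc n) * edge_sign ft (Suc n) = 1" unfolding edge_sign_def by auto
  have Ek: "Ep p n (XC n (Suc n)) = (1 - pq p)^2 * (1 + p^n)" unfolding XC_top using EZ assms by auto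
  have "0 \<le> p^n" using assms by simp
  then have "1 + p^n \<noteq> 0" by linarith
  then have nz: "(1 - pq p)^2 * (1 + p^n) \<noteq> 0" using assms by simp
  have gen: "m \<noteq> 0 \<Longrightarrow> (m - m * m) / (m * m) = (1 - m) / m" for m :: real
    by (simp add: field_simps)
  show ?thesis unfolding KC_def sq ss Ek using gen[OF nz] by simp
qed



lemma S1:
  assumes "p < (1::real)"
  shows "(\<Sum>i\<in>{1..n}. p^(i-1)) = (1 - p^n) / (1 - p)"
proof (induction n)
  case 0 then show ?case by simp
next
  case (Suc n)
  have "1 - p \<noteq> 0" using assms by simp
  then have e: "(1 - p^n) / (1 - p) + p^n = (1 - p^Suc n) / (1 - p)" by (simp add: field_simps)
  have "(\<Sum>i\<in>{1..Suc n}. p^(i-1)) = (\<Sum>i\<in>{1..n}. p^(i-1)) + p^n" by simp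
  then show ?case unfolding Suc.IH e .
qed

lemma S2:
  assumes "p < (1::real)"
  shows "(\<Sum>i\<in>{1..n}. p^(n-i)) = (1 - p^n) / (1 - p)"
proof (induction n)
  case 0 then show ?case by simp
next
  case (Suc n)
  have "(\<Sum>i\<in>{1..Suc n}. p^(Suc n - i)) = (\<Sum>i\<in>{1..n}. p * p^(n - i)) + 1"
    by (simp add: Suc_diff_le)
  also have "\<dots> = p * ((1 - p^n) / (1 - p)) + 1" using Suc.IH by (simp add: sum_distrib_left[symmetric])
  also have "\<dots> = (1 - p^Suc n) / (1 - p)"
  proof -
    have "1 - p \<noteq> 0" using assms by simp
    then show ?thesis by (simp add: field_simps)
  qed
  finally show ?case .
qed

lemma S3: "(\<Sum>i\<in>{1..(n::nat)}. (if even i then 1 else -1::real)) = (if even n then 0 else -1)"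
  by (induction n) auto

lemma SD:
  assumes "odd n" "p < (1::real)"
  shows "(\<Sum>i\<in>{1..n}. Dc p n i) = 2 * (1 - p^n) / (1 - p) - p^(n-1) * (1 - p)"
proof -
  have "(\<Sum>i\<in>{1..n}. Dc p n i) = (\<Sum>i\<in>{1..n}. p^(i-1)) + (\<Sum>i\<in>{1..n}. p^(n-i))
      + (\<Sum>i\<in>{1..n}. (if even i then 1 else -1)) * (p^(n-1) * (1-p))"
    unfolding Dc_def by (simp add: sum.distrib sum_distrib_right mult.assoc)
  then show ?thesis unfolding S1[OF assms(2)] S2[OF assms(2)] S3 using assms(1) by simp
qed

lemma Dc_nonneg:
  assumes "1 \<le> i" "i \<le> n" "0 < p" "p < (1::real)"
  shows "0 \<le> Dc p n i"
proof -
  have a: "p^(n-1) \<le> p^(i-1)" using assms by (intro power_decreasing) auto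
  have b: "0 \<le> p^(n-i)" using assms by simp
  have c: "0 \<le> p^(n-1) * p" using assms by simp
  have "(if even i then 1 else -1) * p^(n-1) * (1-p) \<ge> - (p^(n-1) * (1-p))"
    using assms by (cases "even i") (auto simp: mult_nonneg_nonneg)
  then show ?thesis unfolding Dc_def using a b c by (simp add: algebra_simps)
qed

lemma mZ_bounds:
  assumes "1 \<le> n" "0 < p" "p < (1::real)"
  shows "0 < (1 - pq p)^2 * (1 + p^n)" "(1 - pq p)^2 * (1 + p^n) \<le> 1"
proof -
  have q: "1 - pq p = 1 / (1+p)" using assms by (simp add: field_simps)
  have m: "(1 - pq p)^2 * (1 + p^n) = (1 + p^n) / (1+p)^2" unfolding q by (simp add: power_divide)
  have "0 \<le> p^n" using assms by simp
  then have pos: "0 < 1 + p^n" by linarith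
  show "0 < (1 - pq p)^2 * (1 + p^n)" unfolding m using assms pos by (intro divide_pos_pos) auto
  have "p^n \<le> p" using assms power_decreasing[of 1 n p] by simp
  moreover have "0 \<le> p * p" by simp
  ultimately have "p^n \<le> p * p + p * 2" using assms by linarith
  then have "1 + p^n \<le> (1+p)^2" by (simp add: power2_eq_square algebra_simps)
  then show "(1 - pq p)^2 * (1 + p^n) \<le> 1" unfolding m using assms by simp
qed

lemma KC_nonneg:
  assumes "i \<in> {1..Suc n}" "j \<in> {1..Suc n}" "odd n" "3 \<le> n" "0 < p" "p < 1"
  shows "0 \<le> KC p n ft i j"
proof -
  have w: "0 < 1 + p^n" using assms by (simp add: add_pos_nonneg)
  have "i \<le> n \<or> i = Suc n" "j \<le> n \<or> j = Suc n" using assms by auto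
  then consider "i \<le> n" "j \<le> n" | "i \<le> n" "j = Suc n" | "i = Suc n" "j \<le> n" | "i = Suc n" "j = Suc n"
    by blast
  then show ?thesis
  proof cases
    case 1 then show ?thesis using assms KC_path[of i n j p ft] by auto
  next
    case 2 then show ?thesis using assms KC_ik[of i n p ft] Dc_nonneg[of i n p] w by auto
  next
    case 3 then show ?thesis using assms KC_ik[of j n p ft] KC_sym[of p n ft i j] Dc_nonneg[of j n p] w by auto
  next
    case 4
    have "0 \<le> (1 - (1 - pq p)^2 * (1 + p^n)) / ((1 - pq p)^2 * (1 + p^n))"
      using mZ_bounds[of n p] assms by (intro divide_nonneg_pos) auto
    then show ?thesis using 4 KC_kk[of n p ft] assms by simp
  qed
qed

lemma kk_alg:
  assumes "0 < p" "w \<noteq> 0"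
  shows "(1 - (1 - pq p)^2 * w) / ((1 - pq p)^2 * w) = ((1+p)^2 - w) / w"
proof -
  have q: "(1 - pq p)^2 = 1 / (1+p)^2" using assms by (simp add: field_simps)
  have gen: "u \<noteq> 0 \<Longrightarrow> (1 - (1 / u^2) * w) / ((1 / u^2) * w) = (u^2 - w) / w" for u :: real
    using assms(2) by (simp add: field_simps)
  have "1+p \<noteq> 0" using assms by simp
  then show ?thesis unfolding q by (rule gen)
qed

lemma rest_alg:
  assumes u: "u = 1 + p" and v: "v = 1 - p" and w: "w = 1 + p * x" and vnz: "v \<noteq> 0" and wnz: "(w::real) \<noteq> 0"
  shows "2 * (2 * (1 - p * x) / v - x * v) / w + (u^2 - w) / w
    = (4 + 2 * p - p\<^sup>2 - p ^ 3 - x * (2 + p + p\<^sup>2)) / (v * w)"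
  apply (simp add: field_simps vnz wnz)
  apply (simp add: u v w algebra_simps eval_nat_numeral)
  done

lemma KK_total:
  assumes "odd n" "3 \<le> n" "0 < p" "p < 1"
  shows "(\<Sum>i\<in>{1..Suc n}. \<Sum>j\<in>{1..Suc n}. KC p n ft i j)
     = (\<Sum>i\<in>{1..n}. \<Sum>j\<in>{1..n}. p^(ndist i j)) / p + 2 * (\<Sum>i\<in>{1..n}. Dc p n i) / (1 + p^n)
       + (1 - (1 - pq p)^2 * (1 + p^n)) / ((1 - pq p)^2 * (1 + p^n))"
proof -
  have a: "(\<Sum>i\<in>{1..n}. \<Sum>j\<in>{1..n}. KC p n ft i j) = (\<Sum>i\<in>{1..n}. \<Sum>j\<in>{1..n}. p^(ndist i j)) / p"
    unfolding sum_divide_distrib using KC_path assms by (intro sum.cong refl) auto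
  have b: "(\<Sum>i\<in>{1..n}. KC p n ft i (Suc n)) = (\<Sum>i\<in>{1..n}. Dc p n i) / (1 + p^n)"
    unfolding sum_divide_distrib using KC_ik assms by (intro sum.cong refl) auto
  have c: "(\<Sum>j\<in>{1..n}. KC p n ft (Suc n) j) = (\<Sum>i\<in>{1..n}. Dc p n i) / (1 + p^n)"
    unfolding sum_divide_distrib using KC_ik assms KC_sym by (intro sum.cong refl) metis+
  show ?thesis unfolding sum_sq_Suc a b c KC_kk[OF assms(1-3)] by simp
qed



lemma cycle_part:
  assumes "0 < p" "p < 1" "0 < B" "4 \<le> k" "even k"
  defines "F \<equiv> (1 / p + 2 / (1 - p)) * B\<^sup>2 * real (k - 1) + 2 * B\<^sup>2 * (p ^ (k - 1) - 1) / (1 - p)\<^sup>2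
                    + B\<^sup>2 * (4 + 2 * p - p\<^sup>2 - p ^ 3 - p ^ (k - 2) * (2 + p + p\<^sup>2))
                      / ((1 - p) * (1 + p ^ (k - 1)))"
  shows "(\<exists>Y\<in>outcome_box k B. cycle_var p k ft Y = F) \<and> (\<forall>Y\<in>outcome_box k B. cycle_var p k ft Y \<le> F)"
proof -
  define n where "n = k - 1"
  have k: "k = Suc n" and on: "odd n" and n3: "3 \<le> n" using assms unfolding n_def by auto
  have n1: "1 \<le> n" using n3 by simp
  have pn: "p^n = p * p^(n-1)" using n1 by (simp flip: power_Suc)
  have "0 \<le> p^n" using assms by simp
  then have w0: "1 + p^n \<noteq> 0" by linarith
  define T0 where "T0 = real n + 2*(real n*p - real n*p^2 - p + p^(n+1))/(1-p)^2"
  define kk where "kk = (1 - (1 - pq p)^2 * (1 + p^n)) / ((1 - pq p)^2 * (1 + p^n))"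
  have e1: "(1 / p + 2 / (1 - p)) * B\<^sup>2 * real n + 2 * B\<^sup>2 * (p ^ n - 1) / (1 - p)\<^sup>2 = B\<^sup>2 * T0 / p"
    unfolding T0_def by (rule path_F_alg) (use assms in auto)
  have e2: "2 * (\<Sum>i\<in>{1..n}. Dc p n i) / (1 + p^n) + kk
      = (4 + 2 * p - p\<^sup>2 - p ^ 3 - p^(n-1) * (2 + p + p\<^sup>2)) / ((1 - p) * (1 + p^n))"
  proof -
    have "kk = ((1+p)^2 - (1 + p^n)) / (1 + p^n)" unfolding kk_def by (rule kk_alg) (use assms w0 in auto)
    moreover have "1 + p * p^(n-1) \<noteq> 0" using w0 pn by simp
    ultimately show ?thesis unfolding SD[OF on assms(2)] pn
      using rest_alg[of "1+p" p "1-p" "1 + p * p^(n-1)" "p^(n-1)"] assms by simp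
  qed
  have Fv: "F = (\<Sum>i\<in>{1..Suc n}. \<Sum>j\<in>{1..Suc n}. B * B * KC p n ft i j)"
  proof -
    have "(\<Sum>i\<in>{1..Suc n}. \<Sum>j\<in>{1..Suc n}. B * B * KC p n ft i j) = B\<^sup>2 * (\<Sum>i\<in>{1..Suc n}. \<Sum>j\<in>{1..Suc n}. KC p n ft i j)"
      unfolding power2_eq_square mult.assoc sum_distrib_left ..
    also have "\<dots> = B\<^sup>2 * (T0 / p + (2 * (\<Sum>i\<in>{1..n}. Dc p n i) / (1 + p^n) + kk))"
      unfolding KK_total[OF on n3 assms(1,2)] TT_closed[OF assms(1,2)] T0_def kk_def by (simp add: add_ac)
    also have "\<dots> = F"
      unfolding e2 distrib_left F_def k using e1 by simp
    finally show ?thesis by simp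
  qed
  have w: "(\<lambda>_. B) \<in> outcome_box k B" using assms by (simp add: outcome_box_def)
  show ?thesis
  proof
    show "\<exists>Y\<in>outcome_box k B. cycle_var p k ft Y = F"
      using w Fv cycle_var_K[OF n1] k by auto
    show "\<forall>Y\<in>outcome_box k B. cycle_var p k ft Y \<le> F"
    proof
      fix Y assume Y: "Y \<in> outcome_box k B"
      have "(\<Sum>i\<in>{1..Suc n}. \<Sum>j\<in>{1..Suc n}. Y i * Y j * KC p n ft i j) \<le> (\<Sum>i\<in>{1..Suc n}. \<Sum>j\<in>{1..Suc n}. B * B * KC p n ft i j)"
      proof (intro sum_mono)
        fix i j assume ij: "i \<in> {1..Suc n}" "j \<in> {1..Suc n}"
        then have "0 \<le> Y i" "Y i \<le> B" "0 \<le> Y j" "Y j \<le> B" using Y k by (auto simp: outcome_box_def)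
        then have "Y i * Y j \<le> B * B" by (intro mult_mono) auto
        then show "Y i * Y j * KC p n ft i j \<le> B * B * KC p n ft i j"
          using KC_nonneg[OF ij on n3 assms(1,2)] by (intro mult_right_mono) auto
      qed
      then show "cycle_var p k ft Y \<le> F" unfolding Fv k cycle_var_K[OF n1] .
    qed
  qed
qed

lemma sup_eq:
  assumes "\<exists>Y\<in>A. f Y = (F::real)" "\<forall>Y\<in>A. f Y \<le> F"
  shows "(SUP Y\<in>A. f Y) = F"
  using assms by (intro cSup_eq_maximum) auto



lemma path_maxvar_eq:
  assumes "0 < p" "p < 1" "0 < B" "1 \<le> k"
  shows "path_maxvar p B k ft = (1 / p + 2 / (1 - p)) * B\<^sup>2 * real k + 2 * B\<^sup>2 * (p ^ k - 1) / (1 - p)\<^sup>2"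
  unfolding path_maxvar_def using path_part[OF assms, of ft] by (intro sup_eq) auto

lemma cycle_maxvar_eq:
  assumes "0 < p" "p < 1" "0 < B" "4 \<le> k" "even k"
  shows "cycle_maxvar p B k ft = (1 / p + 2 / (1 - p)) * B\<^sup>2 * real (k - 1) + 2 * B\<^sup>2 * (p ^ (k - 1) - 1) / (1 - p)\<^sup>2
                    + B\<^sup>2 * (4 + 2 * p - p\<^sup>2 - p ^ 3 - p ^ (k - 2) * (2 + p + p\<^sup>2))
                      / ((1 - p) * (1 + p ^ (k - 1)))"
  unfolding cycle_maxvar_def using cycle_part[OF assms, of ft] by (intro sup_eq) auto

lemma const_eq:
  assumes "0 < p" "p < (1::real)"
  shows "(1 / p + 2 / (1 - p)) * B\<^sup>2 = B\<^sup>2 * (1 + p) / (p * (1 - p))"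
proof -
  have "p \<noteq> 0" "1 - p \<noteq> 0" using assms by auto
  then show ?thesis by (simp add: field_simps)
qed

lemma path_limit:
  assumes "0 < p" "p < 1" "0 < B"
  shows "(\<lambda>k. path_maxvar p B k ft / real k) \<longlonglongrightarrow> B\<^sup>2 * (1 + p) / (p * (1 - p))"
proof -
  define c where "c = (1 / p + 2 / (1 - p)) * B\<^sup>2"
  define d where "d = 2 * B\<^sup>2 / (1 - p)\<^sup>2"
  have "(\<lambda>k. c + d * ((p^k - 1) * (1 / real k))) \<longlonglongrightarrow> c + d * ((0 - 1) * 0)"
    using assms by (intro tendsto_intros) auto
  then have lim: "(\<lambda>k. c + d * ((p^k - 1) * (1 / real k))) \<longlonglongrightarrow> B\<^sup>2 * (1 + p) / (p * (1 - p))"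
    unfolding c_def using const_eq[OF assms(1,2)] by simp
  show ?thesis
  proof (rule Lim_transform_eventually[OF lim])
    show "\<forall>\<^sub>F k in sequentially. c + d * ((p^k - 1) * (1 / real k)) = path_maxvar p B k ft / real k"
      unfolding eventually_sequentially
    proof (intro exI[of _ 1] allI impI)
      fix k :: nat assume k: "1 \<le> k"
      then have k0: "real k \<noteq> 0" by simp
      have gen: "c + d * (x * (1 / real k)) = (c * real k + d * x) / real k" for x
        using k0 by (simp add: field_simps)
      have "path_maxvar p B k ft = c * real k + d * (p^k - 1)"
        unfolding path_maxvar_eq[OF assms k] c_def d_def by simp
      then show "c + d * ((p^k - 1) * (1 / real k)) = path_maxvar p B k ft / real k"
        unfolding gen by simp
    qed
  qed
qed

lemma filterlim_lin:
  "filterlim (\<lambda>m::nat. 2 * m - a) at_top sequentially"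
  unfolding filterlim_at_top eventually_sequentially
  by (intro allI, rule_tac x="Z + a" in exI) auto

lemma cycle_limit:
  assumes "0 < p" "p < 1" "0 < B"
  shows "(\<lambda>m. cycle_maxvar p B (2 * m) ft / real (2 * m)) \<longlonglongrightarrow> B\<^sup>2 * (1 + p) / (p * (1 - p))"
proof -
  define c where "c = (1 / p + 2 / (1 - p)) * B\<^sup>2"
  define G where "G m = 2 * B\<^sup>2 * (p ^ (2*m - 1) - 1) / (1 - p)\<^sup>2
                    + B\<^sup>2 * (4 + 2 * p - p\<^sup>2 - p ^ 3 - p ^ (2*m - 2) * (2 + p + p\<^sup>2))
                      / ((1 - p) * (1 + p ^ (2*m - 1)))" for m
  have pz: "(\<lambda>n. p^n) \<longlonglongrightarrow> 0" using assms by (intro LIMSEQ_power_zero) auto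
  have p1: "(\<lambda>m. p^(2*m - 1)) \<longlonglongrightarrow> 0" using filterlim_compose[OF pz filterlim_lin[of 1]] .
  have p2: "(\<lambda>m. p^(2*m - 2)) \<longlonglongrightarrow> 0" using filterlim_compose[OF pz filterlim_lin[of 2]] .
  define Gi where "Gi = 2 * B\<^sup>2 * (0 - 1) / (1 - p)\<^sup>2
                    + B\<^sup>2 * (4 + 2 * p - p\<^sup>2 - p ^ 3 - 0 * (2 + p + p\<^sup>2))
                      / ((1 - p) * (1 + 0))"
  have "G \<longlonglongrightarrow> 2 * B\<^sup>2 * (0 - 1) / (1 - p)\<^sup>2
                    + B\<^sup>2 * (4 + 2 * p - p\<^sup>2 - p ^ 3 - 0 * (2 + p + p\<^sup>2))
                      / ((1 - p) * (1 + 0))"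
    unfolding G_def using assms by (intro tendsto_intros p1 p2) auto
  then have "G \<longlonglongrightarrow> Gi" unfolding Gi_def .
  then have "(\<lambda>m. c * (1 - (1/2) * (1 / real m)) + G m * ((1/2) * (1 / real m))) \<longlonglongrightarrow> c * (1 - (1/2) * 0) + Gi * ((1/2) * 0)"
    by (intro tendsto_intros \<open>G \<longlonglongrightarrow> Gi\<close>)
  then have lim: "(\<lambda>m. c * (1 - (1/2) * (1 / real m)) + G m * ((1/2) * (1 / real m))) \<longlonglongrightarrow> B\<^sup>2 * (1 + p) / (p * (1 - p))"
    unfolding c_def using const_eq[OF assms(1,2)] by simp
  show ?thesis
  proof (rule Lim_transform_eventually[OF lim])
    show "\<forall>\<^sub>F m in sequentially. c * (1 - (1/2) * (1 / real m)) + G m * ((1/2) * (1 / real m)) = cycle_maxvar p B (2 * m) ft / real (2 * m)"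
      unfolding eventually_sequentially
    proof (intro exI[of _ 2] allI impI)
      fix m :: nat assume m: "2 \<le> m"
      then have m0: "real m \<noteq> 0" by simp
      have r: "real (2 * m - 1) = 2 * real m - 1" using m by (simp add: of_nat_diff)
      have ev: "4 \<le> 2 * m" "even (2 * m)" using m by auto
      have "cycle_maxvar p B (2 * m) ft = c * (2 * real m - 1) + G m"
        unfolding cycle_maxvar_eq[OF assms ev] c_def G_def r using m by simp
      have gen: "c * (1 - (1/2) * (1 / real m)) + x * ((1/2) * (1 / real m)) = (c * (2 * real m - 1) + x) / real (2 * m)" for x
        using m0 by (simp add: field_simps)
      then show "c * (1 - (1/2) * (1 / real m)) + G m * ((1/2) * (1 / real m)) = cycle_maxvar p B (2 * m) ft / real (2 * m)"
        using \<open>cycle_maxvar p B (2 * m) ft = c * (2 * real m - 1) + G m\<close> by simp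
    qed
  qed
qed

theorem theorem2:
  fixes p B :: real
  assumes "0 < p" and "p < 1" and "0 < B"
  shows "(\<forall>k first_t. 1 \<le> k \<longrightarrow>
           (let F = (1 / p + 2 / (1 - p)) * B\<^sup>2 * real k + 2 * B\<^sup>2 * (p ^ k - 1) / (1 - p)\<^sup>2 in
             (\<exists>Y\<in>outcome_box k B. path_var p k first_t Y = F)
             \<and> (\<forall>Y\<in>outcome_box k B. path_var p k first_t Y \<le> F)))
    \<and> (\<forall>k first_t. 4 \<le> k \<and> even k \<longrightarrow>
           (let F = (1 / p + 2 / (1 - p)) * B\<^sup>2 * real (k - 1) + 2 * B\<^sup>2 * (p ^ (k - 1) - 1) / (1 - p)\<^sup>2
                    + B\<^sup>2 * (4 + 2 * p - p\<^sup>2 - p ^ 3 - p ^ (k - 2) * (2 + p + p\<^sup>2))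
                      / ((1 - p) * (1 + p ^ (k - 1))) in
             (\<exists>Y\<in>outcome_box k B. cycle_var p k first_t Y = F)
             \<and> (\<forall>Y\<in>outcome_box k B. cycle_var p k first_t Y \<le> F)))
    \<and> (\<forall>first_t. (\<lambda>k. path_maxvar p B k first_t / real k)
           \<longlonglongrightarrow> B\<^sup>2 * (1 + p) / (p * (1 - p)))
    \<and> (\<forall>first_t. (\<lambda>m. cycle_maxvar p B (2 * m) first_t / real (2 * m))
           \<longlonglongrightarrow> B\<^sup>2 * (1 + p) / (p * (1 - p)))"
proof (intro conjI allI impI)
  fix k :: nat and first_t :: bool assume "1 \<le> k"
  then show "let F = (1 / p + 2 / (1 - p)) * B\<^sup>2 * real k + 2 * B\<^sup>2 * (p ^ k - 1) / (1 - p)\<^sup>2 in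
             (\<exists>Y\<in>outcome_box k B. path_var p k first_t Y = F)
             \<and> (\<forall>Y\<in>outcome_box k B. path_var p k first_t Y \<le> F)"
    unfolding Let_def using path_part[OF assms] by blast
next
  fix k :: nat and first_t :: bool assume "4 \<le> k \<and> even k"
  then show "let F = (1 / p + 2 / (1 - p)) * B\<^sup>2 * real (k - 1) + 2 * B\<^sup>2 * (p ^ (k - 1) - 1) / (1 - p)\<^sup>2
                    + B\<^sup>2 * (4 + 2 * p - p\<^sup>2 - p ^ 3 - p ^ (k - 2) * (2 + p + p\<^sup>2))
                      / ((1 - p) * (1 + p ^ (k - 1))) in
             (\<exists>Y\<in>outcome_box k B. cycle_var p k first_t Y = F)
             \<and> (\<forall>Y\<in>outcome_box k B. cycle_var p k first_t Y \<le> F)"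
    unfolding Let_def using cycle_part[OF assms] by blast
next
  fix first_t :: bool show "(\<lambda>k. path_maxvar p B k first_t / real k) \<longlonglongrightarrow> B\<^sup>2 * (1 + p) / (p * (1 - p))"
    by (rule path_limit[OF assms])
next
  fix first_t :: bool show "(\<lambda>m. cycle_maxvar p B (2 * m) first_t / real (2 * m)) \<longlonglongrightarrow> B\<^sup>2 * (1 + p) / (p * (1 - p))"
    by (rule cycle_limit[OF assms])
qed

end
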